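(* Let $R,S$ be rings, $M$ an $(S,R)$-bimodule, $m_1,\dots,m_n\in M$ and $f_1,\dots,f_n\in{}^*M={}_S\mathrm{Hom}(M,S)$. Then $$m\otimes_R f=\sum_{i=1}^n m_i\otimes_R\big((?)f_i\cdot(m)f\big)\quad\text{in } M\otimes_R{}_S\mathrm{Hom}(M,Q)$$ for every left $S$-module $Q$, every $f\in{}_S\mathrm{Hom}(M,Q)$ and every $m\in M$, if and only if $$m\otimes_R \mathrm{id}_M=\sum_{i=1}^n m_i\otimes_R\big((?)f_i\, m\big)\quad\text{in } M\otimes_R{}_S\mathrm{End}(M)$$ for every $m\in M$.
   Context: Homomorphisms of left $S$-modules are written on the right of their arguments: $(m)f$. For $Q\in{}_S\mathcal{M}$, ${}_S\mathrm{Hom}(M,Q)$ is a left $R$-module via $(m)(r\cdot f)=(mr)f$, and the tensor products above are over this structure and the right $R$-structure of $M$. For $f_i\in{}^*M$ and $q\in Q$, $(?)f_i\cdot q$ (written $(?)f_i q$) denotes the left $S$-linear map $M\to Q$, $x\mapsto ((x)f_i)\,q$. *)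

theory Defs
  imports "HOL-Algebra.Module"
begin

definition lmodule :: "('s, 'a) ring_scheme \<Rightarrow> ('s, 'm) module \<Rightarrow> bool" where
  "lmodule S M \<longleftrightarrow> ring S \<and> abelian_group M \<and>
     (\<forall>a\<in>carrier S. \<forall>x\<in>carrier M. a \<odot>\<^bsub>M\<^esub> x \<in> carrier M) \<and>
     (\<forall>a\<in>carrier S. \<forall>b\<in>carrier S. \<forall>x\<in>carrier M.
        (a \<oplus>\<^bsub>S\<^esub> b) \<odot>\<^bsub>M\<^esub> x = a \<odot>\<^bsub>M\<^esub> x \<oplus>\<^bsub>M\<^esub> b \<odot>\<^bsub>M\<^esub> x) \<and>
     (\<forall>a\<in>carrier S. \<forall>x\<in>carrier M. \<forall>y\<in>carrier M.
        a \<odot>\<^bsub>M\<^esub> (x \<oplus>\<^bsub>M\<^esub> y) = a \<odot>\<^bsub>M\<^esub> x \<oplus>\<^bsub>M\<^esub> a \<odot>\<^bsub>M\<^esub> y) \<and>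
     (\<forall>a\<in>carrier S. \<forall>b\<in>carrier S. \<forall>x\<in>carrier M.
        (a \<otimes>\<^bsub>S\<^esub> b) \<odot>\<^bsub>M\<^esub> x = a \<odot>\<^bsub>M\<^esub> (b \<odot>\<^bsub>M\<^esub> x)) \<and>
     (\<forall>x\<in>carrier M. \<one>\<^bsub>S\<^esub> \<odot>\<^bsub>M\<^esub> x = x)"

definition bimodule :: "('s, 'a) ring_scheme \<Rightarrow> ('r, 'b) ring_scheme \<Rightarrow>
    ('s, 'm) module \<Rightarrow> ('m \<Rightarrow> 'r \<Rightarrow> 'm) \<Rightarrow> bool" where
  "bimodule S R M ract \<longleftrightarrow> lmodule S M \<and> ring R \<and>
     (\<forall>x\<in>carrier M. \<forall>r\<in>carrier R. ract x r \<in> carrier M) \<and>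
     (\<forall>x\<in>carrier M. \<forall>r\<in>carrier R. \<forall>r'\<in>carrier R.
        ract x (r \<oplus>\<^bsub>R\<^esub> r') = ract x r \<oplus>\<^bsub>M\<^esub> ract x r') \<and>
     (\<forall>x\<in>carrier M. \<forall>y\<in>carrier M. \<forall>r\<in>carrier R.
        ract (x \<oplus>\<^bsub>M\<^esub> y) r = ract x r \<oplus>\<^bsub>M\<^esub> ract y r) \<and>
     (\<forall>x\<in>carrier M. \<forall>r\<in>carrier R. \<forall>r'\<in>carrier R.
        ract x (r \<otimes>\<^bsub>R\<^esub> r') = ract (ract x r) r') \<and>
     (\<forall>x\<in>carrier M. ract x \<one>\<^bsub>R\<^esub> = x) \<and>
     (\<forall>s\<in>carrier S. \<forall>x\<in>carrier M. \<forall>r\<in>carrier R.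
        ract (s \<odot>\<^bsub>M\<^esub> x) r = s \<odot>\<^bsub>M\<^esub> ract x r)"

text \<open>Left S-linear maps M \<rightarrow> Q, as extensional functions on the carrier of M.
  The paper writes homomorphisms on the right, (m)f; here this is f m.\<close>

definition lhom :: "('s, 'a) ring_scheme \<Rightarrow> ('s, 'm) module \<Rightarrow> ('s, 'q) module \<Rightarrow> ('m \<Rightarrow> 'q) set" where
  "lhom S M Q = {f. f \<in> carrier M \<rightarrow>\<^sub>E carrier Q \<and>
     (\<forall>x\<in>carrier M. \<forall>y\<in>carrier M. f (x \<oplus>\<^bsub>M\<^esub> y) = f x \<oplus>\<^bsub>Q\<^esub> f y) \<and>
     (\<forall>s\<in>carrier S. \<forall>x\<in>carrier M. f (s \<odot>\<^bsub>M\<^esub> x) = s \<odot>\<^bsub>Q\<^esub> f x)}"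

definition ring_lmod :: "('s, 'a) ring_scheme \<Rightarrow> ('s, 's) module" where
  "ring_lmod S = \<lparr>carrier = carrier S, mult = mult S, one = one S,
     zero = zero S, add = add S, smult = mult S\<rparr>"

text \<open>The left R-module _S Hom(M,Q), with (m)(r f) = (m r) f.  Only the additive
  group and the R-action are relevant (the mult/one fields are unused).\<close>

definition hom_module :: "('s, 'a) ring_scheme \<Rightarrow> ('s, 'm) module \<Rightarrow> ('m \<Rightarrow> 'r \<Rightarrow> 'm) \<Rightarrow>
    ('s, 'q) module \<Rightarrow> ('r, 'm \<Rightarrow> 'q) module" where
  "hom_module S M ract Q = \<lparr>carrier = lhom S M Q,
     mult = (\<lambda>f g. \<lambda>x\<in>carrier M. undefined), one = (\<lambda>x\<in>carrier M. undefined),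
     zero = (\<lambda>x\<in>carrier M. \<zero>\<^bsub>Q\<^esub>),
     add = (\<lambda>f g. \<lambda>x\<in>carrier M. f x \<oplus>\<^bsub>Q\<^esub> g x),
     smult = (\<lambda>r f. \<lambda>x\<in>carrier M. f (ract x r))\<rparr>"

text \<open>M \<otimes>_R N (M a right R-module via ract, N a left R-module) is the free abelian
  group on carrier M \<times> carrier N (finitely supported integer-valued functions)
  modulo the subgroup generated by the bilinearity and balancing relations.
  A finite sum of pure tensors \<Sum> m_i \<otimes> n_i is represented by the list of pairs.\<close>

definition freeab :: "('m \<times> 'n) list \<Rightarrow> ('m \<times> 'n \<Rightarrow> int)" where
  "freeab xs = (\<lambda>p. int (count_list xs p))"

inductive_set tensor_rel :: "('r, 'a) ring_scheme \<Rightarrow> ('m, 'b) ring_scheme \<Rightarrow> ('m \<Rightarrow> 'r \<Rightarrow> 'm) \<Rightarrow>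
    ('r, 'n) module \<Rightarrow> ('m \<times> 'n \<Rightarrow> int) set"
  for R M ract N where
  zero: "(\<lambda>_. 0) \<in> tensor_rel R M ract N"
| add: "x \<in> tensor_rel R M ract N \<Longrightarrow> y \<in> tensor_rel R M ract N \<Longrightarrow> (\<lambda>p. x p + y p) \<in> tensor_rel R M ract N"
| neg: "x \<in> tensor_rel R M ract N \<Longrightarrow> (\<lambda>p. - x p) \<in> tensor_rel R M ract N"
| ladd: "m \<in> carrier M \<Longrightarrow> m' \<in> carrier M \<Longrightarrow> y \<in> carrier N \<Longrightarrow>
     (\<lambda>p. freeab [(m \<oplus>\<^bsub>M\<^esub> m', y)] p - freeab [(m, y)] p - freeab [(m', y)] p) \<in> tensor_rel R M ract N"
| radd: "m \<in> carrier M \<Longrightarrow> y \<in> carrier N \<Longrightarrow> y' \<in> carrier N \<Longrightarrow>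
     (\<lambda>p. freeab [(m, y \<oplus>\<^bsub>N\<^esub> y')] p - freeab [(m, y)] p - freeab [(m, y')] p) \<in> tensor_rel R M ract N"
| bal: "m \<in> carrier M \<Longrightarrow> y \<in> carrier N \<Longrightarrow> r \<in> carrier R \<Longrightarrow>
     (\<lambda>p. freeab [(ract m r, y)] p - freeab [(m, r \<odot>\<^bsub>N\<^esub> y)] p) \<in> tensor_rel R M ract N"

definition tensor_eq :: "('r, 'a) ring_scheme \<Rightarrow> ('m, 'b) ring_scheme \<Rightarrow> ('m \<Rightarrow> 'r \<Rightarrow> 'm) \<Rightarrow>
    ('r, 'n) module \<Rightarrow> ('m \<times> 'n) list \<Rightarrow> ('m \<times> 'n) list \<Rightarrow> bool" where
  "tensor_eq R M ract N xs ys \<longleftrightarrow>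
     set xs \<subseteq> carrier M \<times> carrier N \<and> set ys \<subseteq> carrier M \<times> carrier N \<and>
     (\<lambda>p. freeab xs p - freeab ys p) \<in> tensor_rel R M ract N"

definition dual_times :: "('s, 'm) module \<Rightarrow> ('s, 'q) module \<Rightarrow> ('m \<Rightarrow> 's) \<Rightarrow> 'q \<Rightarrow> ('m \<Rightarrow> 'q)" where
  "dual_times M Q g q = (\<lambda>x\<in>carrier M. g x \<odot>\<^bsub>Q\<^esub> q)"

definition cond_Q :: "('s, 'a) ring_scheme \<Rightarrow> ('r, 'b) ring_scheme \<Rightarrow> ('s, 'm) module \<Rightarrow>
    ('m \<Rightarrow> 'r \<Rightarrow> 'm) \<Rightarrow> nat \<Rightarrow> (nat \<Rightarrow> 'm) \<Rightarrow> (nat \<Rightarrow> 'm \<Rightarrow> 's) \<Rightarrow>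
    ('s, 'q) module \<Rightarrow> ('m \<Rightarrow> 'q) \<Rightarrow> 'm \<Rightarrow> bool" where
  "cond_Q S R M ract n ms fs Q f m \<longleftrightarrow>
     tensor_eq R M ract (hom_module S M ract Q) [(m, f)]
       (map (\<lambda>i. (ms i, dual_times M Q (fs i) (f m))) [0..<n])"

definition cond_End :: "('s, 'a) ring_scheme \<Rightarrow> ('r, 'b) ring_scheme \<Rightarrow> ('s, 'm) module \<Rightarrow>
    ('m \<Rightarrow> 'r \<Rightarrow> 'm) \<Rightarrow> nat \<Rightarrow> (nat \<Rightarrow> 'm) \<Rightarrow> (nat \<Rightarrow> 'm \<Rightarrow> 's) \<Rightarrow> 'm \<Rightarrow> bool" where
  "cond_End S R M ract n ms fs m \<longleftrightarrow>
     tensor_eq R M ract (hom_module S M ract M) [(m, \<lambda>x\<in>carrier M. x)]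
       (map (\<lambda>i. (ms i, dual_times M M (fs i) m)) [0..<n])"

end

theory Submission
  imports Defs "HOL-Library.Multiset"
begin

definition DD :: "('m \<times> 'n) list \<Rightarrow> ('m \<times> 'n) list \<Rightarrow> ('m \<times> 'n \<Rightarrow> int)" where
  "DD A B = (\<lambda>p. freeab A p - freeab B p)"

lemma DD_iff: "DD A B = DD A' B' \<longleftrightarrow> mset (A @ B') = mset (A' @ B)"
proof -
  have "DD A B = DD A' B' \<longleftrightarrow> (\<forall>p. count_list A p + count_list B' p = count_list A' p + count_list B p)"
  proof -
    have "\<And>p. (int (count_list A p) - int (count_list B p) = int (count_list A' p) - int (count_list B' p))
       = (count_list A p + count_list B' p = count_list A' p + count_list B p)" by linarith
    then show ?thesis unfolding DD_def freeab_def fun_eq_iff by presburger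
  qed
  also have "\<dots> \<longleftrightarrow> mset (A @ B') = mset (A' @ B)"
    unfolding multiset_eq_iff by (simp add: count_mset)
  finally show ?thesis .
qed

lemma DD_map: "DD A B = DD A' B' \<Longrightarrow> DD (map g A) (map g B) = DD (map g A') (map g B')"
  unfolding DD_iff by (metis map_append mset_map)

lemma DD_append: "DD (A1 @ A2) (B1 @ B2) = (\<lambda>p. DD A1 B1 p + DD A2 B2 p)"
  unfolding DD_def freeab_def by (auto simp: fun_eq_iff)

lemma push_rel:
  fixes x :: "'m \<times> 'n \<Rightarrow> int" and \<phi> :: "'n \<Rightarrow> 'k"
  assumes x: "x \<in> tensor_rel R M ract N1"
    and c: "\<forall>y\<in>carrier N1. \<phi> y \<in> carrier N2"
    and a: "\<forall>y\<in>carrier N1. \<forall>y'\<in>carrier N1. \<phi> (y \<oplus>\<^bsub>N1\<^esub> y') = \<phi> y \<oplus>\<^bsub>N2\<^esub> \<phi> y'"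
    and s: "\<forall>r\<in>carrier R. \<forall>y\<in>carrier N1. \<phi> (r \<odot>\<^bsub>N1\<^esub> y) = r \<odot>\<^bsub>N2\<^esub> \<phi> y"
  shows "(\<exists>A B. x = DD A B) \<and> (\<forall>A B. x = DD A B \<longrightarrow>
           DD (map (apsnd \<phi>) A) (map (apsnd \<phi>) B) \<in> tensor_rel R M ract N2)"
  using x
proof (induction rule: tensor_rel.induct)
  case zero
  have e: "(\<lambda>_. 0) = DD ([]::('m \<times> 'n) list) []" by (simp add: DD_def freeab_def)
  show ?case
  proof (intro conjI allI impI)
    show "\<exists>A B. (\<lambda>_. 0::int) = DD (A::('m \<times> 'n) list) B" using e by blast
    fix A B :: "('m \<times> 'n) list" assume "(\<lambda>_. 0) = DD A B"
    then have "DD (map (apsnd \<phi>) A) (map (apsnd \<phi>) B) = DD (map (apsnd \<phi>) []) (map (apsnd \<phi>) [])"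
      using e DD_map by metis
    also have "\<dots> = (\<lambda>_. 0)" by (simp add: DD_def freeab_def)
    finally show "DD (map (apsnd \<phi>) A) (map (apsnd \<phi>) B) \<in> tensor_rel R M ract N2"
      using tensor_rel.zero by simp
  qed
next
  case (add x y)
  obtain A1 B1 where 1: "x = DD A1 B1" using add by blast
  obtain A2 B2 where 2: "y = DD A2 B2" using add by blast
  have e: "(\<lambda>p. x p + y p) = DD (A1 @ A2) (B1 @ B2)" unfolding 1 2 by (rule DD_append[symmetric])
  have r: "DD (map (apsnd \<phi>) (A1 @ A2)) (map (apsnd \<phi>) (B1 @ B2)) \<in> tensor_rel R M ract N2"
    unfolding map_append DD_append using add 1 2 tensor_rel.add by blast
  show ?case
  proof (intro conjI allI impI)
    show "\<exists>A B. (\<lambda>p. x p + y p) = DD A B" using e by blast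
    fix A B assume "(\<lambda>p. x p + y p) = DD A B"
    then show "DD (map (apsnd \<phi>) A) (map (apsnd \<phi>) B) \<in> tensor_rel R M ract N2"
      using e r DD_map by metis
  qed
next
  case (neg x)
  obtain A1 B1 where 1: "x = DD A1 B1" using neg by blast
  have e: "(\<lambda>p. - x p) = DD B1 A1" using 1 by (simp add: DD_def)
  have r: "DD (map (apsnd \<phi>) B1) (map (apsnd \<phi>) A1) \<in> tensor_rel R M ract N2"
  proof -
    have "DD (map (apsnd \<phi>) B1) (map (apsnd \<phi>) A1) = (\<lambda>p. - DD (map (apsnd \<phi>) A1) (map (apsnd \<phi>) B1) p)"
      by (simp add: DD_def)
    then show ?thesis using neg 1 tensor_rel.neg by metis
  qed
  show ?case
  proof (intro conjI allI impI)
    show "\<exists>A B. (\<lambda>p. - x p) = DD A B" using e by blast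
    fix A B assume "(\<lambda>p. - x p) = DD A B"
    then show "DD (map (apsnd \<phi>) A) (map (apsnd \<phi>) B) \<in> tensor_rel R M ract N2"
      using e r DD_map by metis
  qed
next
  case (ladd m m' y)
  let ?x = "\<lambda>p. freeab [(m \<oplus>\<^bsub>M\<^esub> m', y)] p - freeab [(m, y)] p - freeab [(m', y)] p"
  have e: "?x = DD [(m \<oplus>\<^bsub>M\<^esub> m', y)] [(m, y), (m', y)]" by (auto simp: DD_def freeab_def fun_eq_iff)
  have r: "DD (map (apsnd \<phi>) [(m \<oplus>\<^bsub>M\<^esub> m', y)]) (map (apsnd \<phi>) [(m, y), (m', y)]) \<in> tensor_rel R M ract N2"
  proof -
    have "DD (map (apsnd \<phi>) [(m \<oplus>\<^bsub>M\<^esub> m', y)]) (map (apsnd \<phi>) [(m, y), (m', y)])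
      = (\<lambda>p. freeab [(m \<oplus>\<^bsub>M\<^esub> m', \<phi> y)] p - freeab [(m, \<phi> y)] p - freeab [(m', \<phi> y)] p)"
      by (auto simp: DD_def freeab_def fun_eq_iff)
    then show ?thesis using tensor_rel.ladd[of m M m' "\<phi> y" N2 R ract] ladd c by simp
  qed
  show ?case
  proof (intro conjI allI impI)
    show "\<exists>A B. ?x = DD A B" using e by blast
    fix A B assume "?x = DD A B"
    then show "DD (map (apsnd \<phi>) A) (map (apsnd \<phi>) B) \<in> tensor_rel R M ract N2"
      using e r DD_map by metis
  qed
next
  case (radd m y y')
  let ?x = "\<lambda>p. freeab [(m, y \<oplus>\<^bsub>N1\<^esub> y')] p - freeab [(m, y)] p - freeab [(m, y')] p"
  have e: "?x = DD [(m, y \<oplus>\<^bsub>N1\<^esub> y')] [(m, y), (m, y')]" by (auto simp: DD_def freeab_def fun_eq_iff)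
  have r: "DD (map (apsnd \<phi>) [(m, y \<oplus>\<^bsub>N1\<^esub> y')]) (map (apsnd \<phi>) [(m, y), (m, y')]) \<in> tensor_rel R M ract N2"
  proof -
    have "DD (map (apsnd \<phi>) [(m, y \<oplus>\<^bsub>N1\<^esub> y')]) (map (apsnd \<phi>) [(m, y), (m, y')])
      = (\<lambda>p. freeab [(m, \<phi> y \<oplus>\<^bsub>N2\<^esub> \<phi> y')] p - freeab [(m, \<phi> y)] p - freeab [(m, \<phi> y')] p)"
      using a radd by (auto simp: DD_def freeab_def fun_eq_iff)
    then show ?thesis using tensor_rel.radd[of m M "\<phi> y" N2 "\<phi> y'" R ract] radd c by simp
  qed
  show ?case
  proof (intro conjI allI impI)
    show "\<exists>A B. ?x = DD A B" using e by blast
    fix A B assume "?x = DD A B"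
    then show "DD (map (apsnd \<phi>) A) (map (apsnd \<phi>) B) \<in> tensor_rel R M ract N2"
      using e r DD_map by metis
  qed
next
  case (bal m y r)
  let ?x = "\<lambda>p. freeab [(ract m r, y)] p - freeab [(m, r \<odot>\<^bsub>N1\<^esub> y)] p"
  have e: "?x = DD [(ract m r, y)] [(m, r \<odot>\<^bsub>N1\<^esub> y)]" by (auto simp: DD_def freeab_def fun_eq_iff)
  have rr: "DD (map (apsnd \<phi>) [(ract m r, y)]) (map (apsnd \<phi>) [(m, r \<odot>\<^bsub>N1\<^esub> y)]) \<in> tensor_rel R M ract N2"
  proof -
    have "DD (map (apsnd \<phi>) [(ract m r, y)]) (map (apsnd \<phi>) [(m, r \<odot>\<^bsub>N1\<^esub> y)])
      = (\<lambda>p. freeab [(ract m r, \<phi> y)] p - freeab [(m, r \<odot>\<^bsub>N2\<^esub> \<phi> y)] p)"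
      using s bal by (auto simp: DD_def freeab_def fun_eq_iff)
    then show ?thesis using tensor_rel.bal[of m M "\<phi> y" N2 r R ract] bal c by simp
  qed
  show ?case
  proof (intro conjI allI impI)
    show "\<exists>A B. ?x = DD A B" using e by blast
    fix A B assume "?x = DD A B"
    then show "DD (map (apsnd \<phi>) A) (map (apsnd \<phi>) B) \<in> tensor_rel R M ract N2"
      using e rr DD_map by metis
  qed
qed

lemma bim_lmod: "bimodule S R M ract \<Longrightarrow> lmodule S M"
  by (simp add: bimodule_def)

lemma id_lhom: "lmodule S M \<Longrightarrow> (\<lambda>x\<in>carrier M. x) \<in> lhom S M M"
  unfolding lhom_def lmodule_def by (auto intro: abelian_monoid.a_closed abelian_group.axioms(1))

lemma comp_lhom:
  assumes "f \<in> lhom S M Q" "g \<in> lhom S M M" "lmodule S M"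
  shows "(\<lambda>x\<in>carrier M. f (g x)) \<in> lhom S M Q"
proof -
  have gc: "\<And>x. x \<in> carrier M \<Longrightarrow> g x \<in> carrier M" using assms(2) unfolding lhom_def by auto
  have sc: "\<And>s x. s \<in> carrier S \<Longrightarrow> x \<in> carrier M \<Longrightarrow> s \<odot>\<^bsub>M\<^esub> x \<in> carrier M"
    using assms(3) unfolding lmodule_def by auto
  have ac: "\<And>x y. x \<in> carrier M \<Longrightarrow> y \<in> carrier M \<Longrightarrow> x \<oplus>\<^bsub>M\<^esub> y \<in> carrier M"
    using assms(3) unfolding lmodule_def by (auto intro: abelian_monoid.a_closed abelian_group.axioms(1))
  show ?thesis using assms(1,2) gc sc ac unfolding lhom_def by auto
qed

theorem lemma3p7:
  fixes R :: "'r ring" and S :: "'s ring" and M :: "('s, 'm) module"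
    and ract :: "'m \<Rightarrow> 'r \<Rightarrow> 'm"
    and n :: nat and ms :: "nat \<Rightarrow> 'm" and fs :: "nat \<Rightarrow> 'm \<Rightarrow> 's"
  assumes "ring R" and "ring S" and "bimodule S R M ract"
    and "\<And>i. i < n \<Longrightarrow> ms i \<in> carrier M"
    and "\<And>i. i < n \<Longrightarrow> fs i \<in> lhom S M (ring_lmod S)"
  shows "((\<forall>(Q :: ('s, 'm) module) f m. lmodule S Q \<longrightarrow> f \<in> lhom S M Q \<longrightarrow> m \<in> carrier M \<longrightarrow>
              cond_Q S R M ract n ms fs Q f m)
            \<longrightarrow> (\<forall>m\<in>carrier M. cond_End S R M ract n ms fs m))
       \<and> ((\<forall>m\<in>carrier M. cond_End S R M ract n ms fs m)
            \<longrightarrow> (\<forall>(Q :: ('s, 'q) module) f m. lmodule S Q \<longrightarrow> f \<in> lhom S M Q \<longrightarrow> m \<in> carrier M \<longrightarrow>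
              cond_Q S R M ract n ms fs Q f m))"
proof (intro conjI impI ballI allI)
  have lm: "lmodule S M" using assms(3) by (rule bim_lmod)
  have rc: "\<And>x r. x \<in> carrier M \<Longrightarrow> r \<in> carrier R \<Longrightarrow> ract x r \<in> carrier M"
    using assms(3) unfolding bimodule_def by auto
  {
    fix m assume H: "\<forall>(Q :: ('s, 'm) module) f m. lmodule S Q \<longrightarrow> f \<in> lhom S M Q \<longrightarrow> m \<in> carrier M \<longrightarrow>
              cond_Q S R M ract n ms fs Q f m" and m: "m \<in> carrier M"
    have "cond_Q S R M ract n ms fs M (\<lambda>x\<in>carrier M. x) m"
      using H lm id_lhom[OF lm] m by blast
    then show "cond_End S R M ract n ms fs m"
      unfolding cond_Q_def cond_End_def using m by simp
  }
  fix Q :: "('s, 'q) module" and f m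
  assume H: "\<forall>m\<in>carrier M. cond_End S R M ract n ms fs m"
    and Q: "lmodule S Q" and f: "f \<in> lhom S M Q" and m: "m \<in> carrier M"
  define \<phi> where "\<phi> = (\<lambda>g. \<lambda>x\<in>carrier M. f (g x))"
  let ?N1 = "hom_module S M ract M" and ?N2 = "hom_module S M ract Q"
  have fa: "\<And>x y. x \<in> carrier M \<Longrightarrow> y \<in> carrier M \<Longrightarrow> f (x \<oplus>\<^bsub>M\<^esub> y) = f x \<oplus>\<^bsub>Q\<^esub> f y"
    using f unfolding lhom_def by auto
  have fs': "\<And>s x. s \<in> carrier S \<Longrightarrow> x \<in> carrier M \<Longrightarrow> f (s \<odot>\<^bsub>M\<^esub> x) = s \<odot>\<^bsub>Q\<^esub> f x"
    using f unfolding lhom_def by auto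
  have fext: "(\<lambda>x\<in>carrier M. f x) = f" using f unfolding lhom_def by (auto simp: PiE_def extensional_restrict)
  have gc: "\<And>g x. g \<in> lhom S M M \<Longrightarrow> x \<in> carrier M \<Longrightarrow> g x \<in> carrier M"
    unfolding lhom_def by auto
  have c: "\<forall>y\<in>carrier ?N1. \<phi> y \<in> carrier ?N2"
    unfolding hom_module_def \<phi>_def using comp_lhom[OF f _ lm] by simp
  have a: "\<forall>y\<in>carrier ?N1. \<forall>y'\<in>carrier ?N1. \<phi> (y \<oplus>\<^bsub>?N1\<^esub> y') = \<phi> y \<oplus>\<^bsub>?N2\<^esub> \<phi> y'"
    unfolding hom_module_def \<phi>_def using fa gc by (auto simp: fun_eq_iff)
  have s: "\<forall>r\<in>carrier R. \<forall>y\<in>carrier ?N1. \<phi> (r \<odot>\<^bsub>?N1\<^esub> y) = r \<odot>\<^bsub>?N2\<^esub> \<phi> y"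
    unfolding hom_module_def \<phi>_def using rc by (auto simp: fun_eq_iff)
  have E: "cond_End S R M ract n ms fs m" using H m by blast
  let ?L = "map (\<lambda>i. (ms i, dual_times M M (fs i) m)) [0..<n]"
  have sets: "set [(m, \<lambda>x\<in>carrier M. x)] \<subseteq> carrier M \<times> carrier ?N1" "set ?L \<subseteq> carrier M \<times> carrier ?N1"
    and rel: "DD [(m, \<lambda>x\<in>carrier M. x)] ?L \<in> tensor_rel R M ract ?N1"
    using E unfolding cond_End_def tensor_eq_def DD_def by auto
  have P: "DD (map (apsnd \<phi>) [(m, \<lambda>x\<in>carrier M. x)]) (map (apsnd \<phi>) ?L) \<in> tensor_rel R M ract ?N2"
    using push_rel[OF rel c a s] by blast
  have p1: "map (apsnd \<phi>) [(m, \<lambda>x\<in>carrier M. x)] = [(m, f)]"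
  proof -
    have "(\<lambda>x\<in>carrier M. f ((\<lambda>x\<in>carrier M. x) x)) = (\<lambda>x\<in>carrier M. f x)"
      by (rule restrict_ext) simp
    then show ?thesis unfolding \<phi>_def using fext by simp
  qed
  have fsS: "\<And>i x. i < n \<Longrightarrow> x \<in> carrier M \<Longrightarrow> fs i x \<in> carrier S"
    using assms(5) unfolding lhom_def ring_lmod_def by (simp add: PiE_iff)
  have p2: "map (apsnd \<phi>) ?L = map (\<lambda>i. (ms i, dual_times M Q (fs i) (f m))) [0..<n]"
    unfolding \<phi>_def dual_times_def using fs' fsS m by (auto simp: fun_eq_iff)
  have s1: "set [(m, f)] \<subseteq> carrier M \<times> carrier ?N2"
    using m f by (simp add: hom_module_def)
  have s2: "set (map (\<lambda>i. (ms i, dual_times M Q (fs i) (f m))) [0..<n]) \<subseteq> carrier M \<times> carrier ?N2"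
  proof -
    have "set (map (apsnd \<phi>) ?L) \<subseteq> carrier M \<times> carrier ?N2" using sets(2) c by auto
    then show ?thesis using p2 by simp
  qed
  show "cond_Q S R M ract n ms fs Q f m"
    unfolding cond_Q_def tensor_eq_def using s1 s2 P unfolding p1 p2 DD_def by simp
qed

end
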